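(* Let $n\ge 3$, let $G_1$ be the star graph on $n$ nodes with Laplacian $Q_1$, and let $G_1^c$ be its complement, with Laplacian $nI-J-Q_1$ ($J$ the $n\times n$ all-one matrix). For $p\ge0$ let $$Q(p)=\begin{bmatrix} Q_1+npI & -pJ\\ -pJ & nI-J-Q_1+npI\end{bmatrix},$$ with eigenvalues $0=\mu_N(p)\le\mu_{N-1}(p)\le\mu_{N-2}(p)\le\dots\le\mu_1(p)$, $N=2n$. Then for every $p>0$ the eigenvalue $2np$ of $Q(p)$ is not the second smallest eigenvalue, i.e. $\mu_{N-1}(p)\neq 2np$ (so no structural transition of the algebraic connectivity exists); moreover, $\mu_{N-2}(p)=2np$ if and only if $0<p\le \frac1n$, i.e. the transition of the third smallest eigenvalue occurs at $p^*_{N-2}=\frac1n$.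
   Context: $2np$ is an eigenvalue of $Q(p)$ with eigenvector $[u^T,-u^T]^T$, $u$ the all-one vector. $Q(p)$ is the Laplacian of the star coupled to its (disconnected) complement by an $n$-to-$n$ interconnection of weight $p$. *)

theory Defs
  imports "Jordan_Normal_Form.Matrix" "Jordan_Normal_Form.Char_Poly"
begin

definition graph_laplacian :: "nat \<Rightarrow> (nat \<Rightarrow> nat \<Rightarrow> bool) \<Rightarrow> real mat" where
  "graph_laplacian n E = mat n n (\<lambda>(i,j).
      if i = j then real (card {k\<in>{0..<n}. k \<noteq> i \<and> E i k})
      else if E i j then -1 else 0)"

definition star_edge :: "nat \<Rightarrow> nat \<Rightarrow> bool" where
  "star_edge i j \<longleftrightarrow> i \<noteq> j \<and> (i = 0 \<or> j = 0)"

definition star_laplacian :: "nat \<Rightarrow> real mat" where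
  "star_laplacian n = graph_laplacian n star_edge"

definition J_mat :: "nat \<Rightarrow> real mat" where
  "J_mat n = mat n n (\<lambda>_. 1)"

definition Qp :: "nat \<Rightarrow> real \<Rightarrow> real mat" where
  "Qp n p = four_block_mat
     (star_laplacian n + (real n * p) \<cdot>\<^sub>m 1\<^sub>m n)
     ((- p) \<cdot>\<^sub>m J_mat n)
     ((- p) \<cdot>\<^sub>m J_mat n)
     (real n \<cdot>\<^sub>m 1\<^sub>m n - J_mat n - star_laplacian n + (real n * p) \<cdot>\<^sub>m 1\<^sub>m n)"

(* eigenvalues (with algebraic multiplicity) in ascending order: the sorted list of
   roots of the characteristic polynomial (defined when it splits over the reals,
   which is the case for real symmetric matrices) *)
definition eigvals_asc :: "real mat \<Rightarrow> real list" where
  "eigvals_asc A = (THE xs. sorted xs \<and> length xs = dim_row A \<and>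
       char_poly A = (\<Prod>x\<leftarrow>xs. [:- x, 1:]))"

(* mu A k for k = 1..N (N = dimension): mu_N \<le> ... \<le> mu_1 *)
definition mu :: "real mat \<Rightarrow> nat \<Rightarrow> real" where
  "mu A k = eigvals_asc A ! (dim_row A - k)"

end

theory Submission
  imports Defs
begin

definition qf :: "nat \<Rightarrow> real \<Rightarrow> nat \<Rightarrow> nat \<Rightarrow> real" where
  "qf n p i j = (if i < n \<and> j < n then
      (if i = j then (if i = 0 then real n - 1 else 1) + real n * p
       else if i = 0 \<or> j = 0 then -1 else 0)
    else if i < n \<or> j < n then - p
    else (if i = j then (if i = n then 0 else real n - 2) + real n * p
          else if i = n \<or> j = n then 0 else -1))"

lemma card_star: "i < n \<Longrightarrow> card {k\<in>{0..<n}. k \<noteq> i \<and> star_edge i k} = (if i = 0 then n - 1 else 1)"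
proof (cases "i = 0")
  case True
  then have "{k\<in>{0..<n}. k \<noteq> i \<and> star_edge i k} = {1..<n}" by (auto simp: star_edge_def)
  then show ?thesis using True by simp
next
  case False
  assume "i < n"
  then have "{k\<in>{0..<n}. k \<noteq> i \<and> star_edge i k} = {0}" using False by (auto simp: star_edge_def)
  then show ?thesis using False by simp
qed

lemma SL_idx: "i < n \<Longrightarrow> j < n \<Longrightarrow> star_laplacian n $$ (i,j) =
   (if i = j then (if i = 0 then real n - 1 else 1) else if i = 0 \<or> j = 0 then -1 else 0)"
proof -
  assume i: "i < n" and j: "j < n"
  have c: "real (card {k\<in>{0..<n}. k \<noteq> i \<and> star_edge i k}) = (if i = 0 then real n - 1 else 1)"
    using card_star[OF i] i by (simp add: of_nat_diff)
  show ?thesis unfolding star_laplacian_def graph_laplacian_def index_mat(1)[OF i j] split c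
    by (simp add: star_edge_def)
qed

lemma Qp_mat: assumes "n \<ge> 1" shows "Qp n p = mat (2*n) (2*n) (\<lambda>(i,j). qf n p i j)"
proof (rule eq_matI)
  fix i j assume i: "i < dim_row (mat (2*n) (2*n) (\<lambda>(i,j). qf n p i j))" and j: "j < dim_col (mat (2*n) (2*n) (\<lambda>(i,j). qf n p i j))"
  then have i: "i < 2*n" and j: "j < 2*n" by auto
  have d: "dim_row (star_laplacian n) = n" "dim_col (star_laplacian n) = n"
    by (auto simp: star_laplacian_def graph_laplacian_def)
  have e: "Qp n p $$ (i, j) = (if i < n then if j < n then star_laplacian n $$ (i,j) + (if i = j then real n * p else 0) else - p
      else if j < n then - p else (if i = j then real n else 0) - 1 - star_laplacian n $$ (i-n,j-n) + (if i = j then real n * p else 0))"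
    using i j unfolding Qp_def by (auto simp: d J_mat_def)
  show "Qp n p $$ (i, j) = mat (2*n) (2*n) (\<lambda>(i,j). qf n p i j) $$ (i, j)"
    unfolding e using i j assms
    by (auto simp: SL_idx qf_def)
qed (auto simp: Qp_def star_laplacian_def graph_laplacian_def)


definition ra :: "nat \<Rightarrow> nat \<Rightarrow> nat" where
  "ra n i = (if i = 0 then 0 else if i = 1 then n else if i \<le> n then i - 1 else i)"
definition rb :: "nat \<Rightarrow> nat \<Rightarrow> nat" where
  "rb n i = (if i = 1 then 0 else if i \<le> n then i - 2 else i - 1)"
definition hi :: "nat \<Rightarrow> nat \<Rightarrow> nat" where
  "hi n j = (if 2 \<le> j \<and> j \<le> n then n else 2 * n)"
definition pif :: "nat \<Rightarrow> nat \<Rightarrow> nat \<Rightarrow> real" where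
  "pif n i k = (if k = ra n i then 1 else 0) - (if i \<noteq> 0 \<and> k = rb n i then 1 else 0)"
definition pf :: "nat \<Rightarrow> nat \<Rightarrow> nat \<Rightarrow> real" where
  "pf n m j = (if ra n j \<le> m \<and> m < hi n j then 1 else 0)"
definition Pm :: "nat \<Rightarrow> real mat" where "Pm n = mat (2*n) (2*n) (\<lambda>(i,j). pf n i j)"
definition Pim :: "nat \<Rightarrow> real mat" where "Pim n = mat (2*n) (2*n) (\<lambda>(i,j). pif n i j)"

lemma ra_lt: "n \<ge> 2 \<Longrightarrow> i < 2*n \<Longrightarrow> ra n i < 2*n" by (auto simp: ra_def)
lemma rb_lt: "n \<ge> 2 \<Longrightarrow> i < 2*n \<Longrightarrow> rb n i < 2*n" by (auto simp: rb_def)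
lemma ra_rb: "n \<ge> 2 \<Longrightarrow> i \<noteq> 0 \<Longrightarrow> ra n i \<noteq> rb n i" by (auto simp: ra_def rb_def)

lemma mult_Pim: assumes n: "n \<ge> 2" and M: "M \<in> carrier_mat (2*n) nc" and i: "i < 2*n" and j: "j < nc"
  shows "(Pim n * M) $$ (i,j) = M $$ (ra n i, j) - (if i \<noteq> 0 then M $$ (rb n i, j) else 0)"
proof -
  have "(Pim n * M) $$ (i,j) = (\<Sum>k\<in>{0..<2*n}. pif n i k * M $$ (k,j))"
    using M i j by (simp add: Pim_def scalar_prod_def)
  also have "\<dots> = (\<Sum>k\<in>{0..<2*n}. (if k = ra n i then M $$ (k,j) else 0)) - (\<Sum>k\<in>{0..<2*n}. (if i \<noteq> 0 \<and> k = rb n i then M $$ (k,j) else 0))"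
    unfolding sum_subtractf[symmetric] pif_def by (intro sum.cong) auto
  also have "\<dots> = M $$ (ra n i, j) - (if i \<noteq> 0 then M $$ (rb n i, j) else 0)"
    using ra_lt[OF n i] rb_lt[OF n i] by (cases "i = 0") (simp_all add: sum.delta')
  finally show ?thesis .
qed

lemma mult_Pm: assumes n: "n \<ge> 2" and M: "M \<in> carrier_mat nr (2*n)" and i: "i < nr" and j: "j < 2*n"
  shows "(M * Pm n) $$ (i,j) = (\<Sum>m\<in>{ra n j..<hi n j}. M $$ (i,m))"
proof -
  have "(M * Pm n) $$ (i,j) = (\<Sum>m\<in>{0..<2*n}. M $$ (i,m) * pf n m j)"
    using M i j by (simp add: Pm_def scalar_prod_def)
  also have "\<dots> = (\<Sum>m\<in>{0..<2*n}. if m \<in> {ra n j..<hi n j} then M $$ (i,m) else 0)"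
    unfolding pf_def by (intro sum.cong) auto
  also have "\<dots> = (\<Sum>m\<in>{0..<2*n} \<inter> {ra n j..<hi n j}. M $$ (i,m))"
    by (metis (no_types) finite_atLeastLessThan sum.inter_restrict)
  also have "{0..<2*n} \<inter> {ra n j..<hi n j} = {ra n j..<hi n j}"
    by (auto simp: hi_def)
  finally show ?thesis .
qed

lemma ra_simps: "ra n 0 = 0" "ra n (Suc 0) = n" "ra n 1 = n" "2 \<le> i \<Longrightarrow> i \<le> n \<Longrightarrow> ra n i = i - 1" "0 < n \<Longrightarrow> n < i \<Longrightarrow> ra n i = i"
  by (auto simp: ra_def)
lemma rb_simps: "rb n (Suc 0) = 0" "rb n 1 = 0" "2 \<le> i \<Longrightarrow> i \<le> n \<Longrightarrow> rb n i = i - 2" "0 < n \<Longrightarrow> n < i \<Longrightarrow> rb n i = i - 1"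
  by (auto simp: rb_def)
lemma hi_simps: "hi n 0 = 2*n" "hi n (Suc 0) = 2*n" "hi n 1 = 2*n" "2 \<le> i \<Longrightarrow> i \<le> n \<Longrightarrow> hi n i = n" "n < i \<Longrightarrow> hi n i = 2*n"
  by (auto simp: hi_def)

lemma pf_id: assumes n: "n \<ge> 2" "i < 2*n" "j < 2*n"
  shows "pf n (ra n i) j - (if i \<noteq> 0 then pf n (rb n i) j else 0) = (if i = j then 1 else 0)"
proof -
  have ci: "i = 0 \<or> i = 1 \<or> (2 \<le> i \<and> i \<le> n) \<or> n < i" by linarith
  have cj: "j = 0 \<or> j = 1 \<or> (2 \<le> j \<and> j \<le> n) \<or> n < j" by linarith
  show ?thesis
    using ci cj n
    by (elim disjE conjE) (auto simp: pf_def ra_simps rb_simps hi_simps)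
qed

lemma PimPm: assumes n: "n \<ge> 2" shows "Pim n * Pm n = 1\<^sub>m (2*n)"
proof (rule eq_matI)
  fix i j assume i: "i < dim_row (1\<^sub>m (2*n) :: real mat)" and j: "j < dim_col (1\<^sub>m (2*n) :: real mat)"
  then have i: "i < 2*n" and j: "j < 2*n" by auto
  have P: "Pm n \<in> carrier_mat (2*n) (2*n)" by (simp add: Pm_def)
  have e: "(Pim n * Pm n) $$ (i,j) = pf n (ra n i) j - (if i \<noteq> 0 then pf n (rb n i) j else 0)"
    unfolding mult_Pim[OF n P i j] using i j ra_lt[OF n i] rb_lt[OF n i] n
    by (simp add: Pm_def)
  have "pf n (ra n i) j - (if i \<noteq> 0 then pf n (rb n i) j else 0) = (if i = j then 1 else 0)"
    by (rule pf_id[OF n i j])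
  then show "(Pim n * Pm n) $$ (i,j) = 1\<^sub>m (2*n) $$ (i,j)"
    unfolding e using i j by simp
qed (auto simp: Pim_def Pm_def)


definition cn :: "nat \<Rightarrow> nat \<Rightarrow> nat \<Rightarrow> nat \<Rightarrow> real" where
  "cn a b c d = real (min b d - max a c)"

definition Ind :: "nat \<Rightarrow> nat \<Rightarrow> real \<Rightarrow> nat \<Rightarrow> real" where
  "Ind c d x m = (if c \<le> m \<and> m < d then x else 0)"

lemma sum_Ind: "(\<Sum>m\<in>{a..<b}. Ind c d x m) = x * cn a b c d"
proof -
  have "(\<Sum>m\<in>{a..<b}. Ind c d x m) = (\<Sum>m\<in>{a..<b}. if m \<in> {c..<d} then x else 0)"
    unfolding Ind_def by (intro sum.cong refl) simp
  also have "\<dots> = (\<Sum>m\<in>{a..<b} \<inter> {c..<d}. x)"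
    by (simp only: sum.inter_restrict[OF finite_atLeastLessThan])
  also have "\<dots> = x * cn a b c d"
    by (simp only: Int_atLeastLessThan sum_constant card_atLeastLessThan cn_def mult.commute)
  finally show ?thesis .
qed

definition rsf :: "nat \<Rightarrow> real \<Rightarrow> nat \<Rightarrow> nat \<Rightarrow> nat \<Rightarrow> real" where
  "rsf n p k a b = (if k = 0 then (real n - 1 + real n * p) * cn a b 0 1 - cn a b 1 n - p * cn a b n (2*n)
     else if k < n then (1 + real n * p) * cn a b k (k+1) - cn a b 0 1 - p * cn a b n (2*n)
     else if k = n then (real n * p) * cn a b n (n+1) - p * cn a b 0 n
     else (real n - 1 + real n * p) * cn a b k (k+1) - cn a b (n+1) (2*n) - p * cn a b 0 n)"

lemma qf_dec: assumes "k < 2*n" "m < 2*n"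
  shows "qf n p k m = (if k = 0 then Ind 0 1 (real n - 1 + real n * p) m + Ind 1 n (-1) m + Ind n (2*n) (-p) m
     else if k < n then Ind k (k+1) (1 + real n * p) m + Ind 0 1 (-1) m + Ind n (2*n) (-p) m
     else if k = n then Ind n (n+1) (real n * p) m + Ind 0 n (-p) m
     else Ind k (k+1) (real n - 1 + real n * p) m + Ind (n+1) (2*n) (-1) m + Ind 0 n (-p) m)"
proof -
  consider "k = 0" | "0 < k" "k < n" | "k = n" | "n < k" by linarith
  then show ?thesis
  proof cases
    case 1 then show ?thesis using assms by (cases "m = 0"; cases "m < n") (simp_all add: qf_def Ind_def)
  next
    case 2 then show ?thesis using assms by (cases "m = 0"; cases "m < n"; cases "m = k") (simp_all add: qf_def Ind_def)
  next
    case 3 then show ?thesis using assms by (cases "m < n"; cases "m = n") (simp_all add: qf_def Ind_def)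
  next
    case 4 then show ?thesis using assms by (cases "m < n"; cases "m = n"; cases "m = k") (simp_all add: qf_def Ind_def)
  qed
qed

lemma rowsum: assumes "k < 2*n" "b \<le> 2*n"
  shows "(\<Sum>m\<in>{a..<b}. qf n p k m) = rsf n p k a b"
proof -
  have "(\<Sum>m\<in>{a..<b}. qf n p k m) = (\<Sum>m\<in>{a..<b}. (if k = 0 then Ind 0 1 (real n - 1 + real n * p) m + Ind 1 n (-1) m + Ind n (2*n) (-p) m
     else if k < n then Ind k (k+1) (1 + real n * p) m + Ind 0 1 (-1) m + Ind n (2*n) (-p) m
     else if k = n then Ind n (n+1) (real n * p) m + Ind 0 n (-p) m
     else Ind k (k+1) (real n - 1 + real n * p) m + Ind (n+1) (2*n) (-1) m + Ind 0 n (-p) m))"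
    using assms by (intro sum.cong[OF refl] qf_dec) auto
  also have "\<dots> = rsf n p k a b"
    unfolding rsf_def by (simp add: sum.distrib sum_Ind)
  finally show ?thesis .
qed


definition Qm :: "nat \<Rightarrow> real \<Rightarrow> real mat" where "Qm n p = mat (2*n) (2*n) (\<lambda>(i,j). qf n p i j)"
definition Tm :: "nat \<Rightarrow> real \<Rightarrow> real mat" where "Tm n p = Pim n * Qm n p * Pm n"

lemma hi_le: "hi n j \<le> 2*n" by (auto simp: hi_def)

lemma Tm_idx: assumes n: "n \<ge> 2" and i: "i < 2*n" and j: "j < 2*n"
  shows "Tm n p $$ (i,j) = rsf n p (ra n i) (ra n j) (hi n j) - (if i \<noteq> 0 then rsf n p (rb n i) (ra n j) (hi n j) else 0)"
proof -
  have Q: "Qm n p \<in> carrier_mat (2*n) (2*n)" by (simp add: Qm_def)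
  have PQ: "Pim n * Qm n p \<in> carrier_mat (2*n) (2*n)" by (rule mult_carrier_mat) (auto simp: Qm_def Pim_def)
  have "Tm n p $$ (i,j) = (\<Sum>m\<in>{ra n j..<hi n j}. (Pim n * Qm n p) $$ (i,m))"
    unfolding Tm_def by (rule mult_Pm[OF n PQ i j])
  also have "\<dots> = (\<Sum>m\<in>{ra n j..<hi n j}. qf n p (ra n i) m - (if i \<noteq> 0 then qf n p (rb n i) m else 0))"
  proof (intro sum.cong[OF refl])
    fix m assume "m \<in> {ra n j..<hi n j}"
    then have m: "m < 2*n" using hi_le[of n j] by auto
    show "(Pim n * Qm n p) $$ (i,m) = qf n p (ra n i) m - (if i \<noteq> 0 then qf n p (rb n i) m else 0)"
      unfolding mult_Pim[OF n Q i m] using m ra_lt[OF n i] rb_lt[OF n i] by (simp add: Qm_def)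
  qed
  also have "\<dots> = rsf n p (ra n i) (ra n j) (hi n j) - (if i \<noteq> 0 then rsf n p (rb n i) (ra n j) (hi n j) else 0)"
    using ra_lt[OF n i] rb_lt[OF n i] hi_le[of n j]
    by (cases "i = 0") (simp_all add: sum_subtractf rowsum)
  finally show ?thesis .
qed

lemma cn_simp: "cn a b c d = real (min b d - max a c)" by (simp add: cn_def)

lemma rsf_simps: "rsf n p 0 a b = (real n - 1 + real n * p) * cn a b 0 1 - cn a b 1 n - p * cn a b n (2*n)"
  "0 < k \<Longrightarrow> k < n \<Longrightarrow> rsf n p k a b = (1 + real n * p) * cn a b k (k+1) - cn a b 0 1 - p * cn a b n (2*n)"
  "0 < n \<Longrightarrow> rsf n p n a b = (real n * p) * cn a b n (n+1) - p * cn a b 0 n"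
  "n < k \<Longrightarrow> rsf n p k a b = (real n - 1 + real n * p) * cn a b k (k+1) - cn a b (n+1) (2*n) - p * cn a b 0 n"
  by (simp_all add: rsf_def)

lemma Tm_ut: assumes n: "n \<ge> 2" and i: "i < 2*n" and ji: "j < i"
  shows "Tm n p $$ (i,j) = 0"
proof -
  have j: "j < 2*n" using i ji by auto
  have e: "Tm n p $$ (i,j) = rsf n p (ra n i) (ra n j) (hi n j) - rsf n p (rb n i) (ra n j) (hi n j)"
    unfolding Tm_idx[OF n i j] using ji by simp
  consider "i = 1" | "2 \<le> i" "i \<le> n" | "i = n + 1" | "n + 2 \<le> i" using ji by linarith
  then show ?thesis
  proof cases
    case 1
    then have "j = 0" using ji by simp
    then show ?thesis using e 1 n by (simp add: ra_simps rb_simps hi_simps rsf_simps cn_simp)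
  next
    case 2
    have rai: "ra n i = i - 1" "rb n i = i - 2" using 2 by (simp_all add: ra_simps rb_simps)
    consider "j = 0" | "j = 1" | "2 \<le> j" "j < i" using ji by linarith
    then show ?thesis
    proof cases
      case 1 then show ?thesis unfolding e rai using 2 n
        by (cases "i = 2") (simp_all add: ra_simps hi_simps rsf_simps cn_simp)
    next
      case 3 then show ?thesis unfolding e rai using 2 n
        by (cases "i = 2") (simp_all add: ra_simps hi_simps rsf_simps cn_simp)
    next
      case 2 then show ?thesis unfolding e rai using \<open>2 \<le> i\<close> \<open>i \<le> n\<close> n
        by (cases "i = 2") (simp_all add: ra_simps hi_simps rsf_simps cn_simp)
    qed
  next
    case 3
    have rai: "ra n i = n + 1" "rb n i = n" using 3 n by (simp_all add: ra_simps rb_simps)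
    consider "j = 0" | "j = 1" | "2 \<le> j" "j \<le> n" using ji 3 by linarith
    then show ?thesis
    proof cases
      case 1 then show ?thesis unfolding e rai using n by (simp add: ra_simps hi_simps rsf_simps cn_simp)
    next
      case 2 then show ?thesis unfolding e rai using n by (simp add: ra_simps hi_simps rsf_simps cn_simp)
    next
      case 3 then show ?thesis unfolding e rai using n by (simp add: ra_simps hi_simps rsf_simps cn_simp)
    qed
  next
    case 4
    have rai: "ra n i = i" "rb n i = i - 1" using 4 n by (simp_all add: ra_simps rb_simps)
    consider "j = 0" | "j = 1" | "2 \<le> j" "j \<le> n" | "n < j" using ji by linarith
    then show ?thesis
    proof cases
      case 1 then show ?thesis unfolding e rai using n 4 i by (simp add: ra_simps hi_simps rsf_simps cn_simp)
    next
      case 2 then show ?thesis unfolding e rai using n 4 i by (simp add: ra_simps hi_simps rsf_simps cn_simp)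
    next
      case 3 then show ?thesis unfolding e rai using n 4 i by (simp add: ra_simps hi_simps rsf_simps cn_simp)
    next
      case 5: 4 then show ?thesis unfolding e rai using n 4 i ji by (simp add: ra_simps hi_simps rsf_simps cn_simp)
    qed
  qed
qed


definition dg :: "nat \<Rightarrow> real \<Rightarrow> nat \<Rightarrow> real" where
  "dg n p i = (if i = 0 then 0 else if i = 1 then 2 * real n * p else if i = 2 then real n + real n * p
     else if i \<le> n then 1 + real n * p else if i = n + 1 then real n * p else real n - 1 + real n * p)"

lemma Tm_diag: assumes n: "n \<ge> 2" and i: "i < 2*n"
  shows "Tm n p $$ (i,i) = dg n p i"
proof -
  have e: "Tm n p $$ (i,i) = rsf n p (ra n i) (ra n i) (hi n i) - (if i \<noteq> 0 then rsf n p (rb n i) (ra n i) (hi n i) else 0)"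
    by (rule Tm_idx[OF n i i])
  consider "i = 0" | "i = 1" | "i = 2" | "3 \<le> i" "i \<le> n" | "i = n + 1" | "n + 2 \<le> i" by linarith
  then show ?thesis
  proof cases
    case 1 then show ?thesis using e n by (simp add: ra_simps rb_simps hi_simps rsf_simps cn_simp dg_def)
  next
    case 2 then show ?thesis using e n by (simp add: ra_simps rb_simps hi_simps rsf_simps cn_simp dg_def algebra_simps)
  next
    case 3
    have r: "ra n i = 1" "rb n i = 0" "hi n i = n" using 3 n by (simp_all add: ra_simps rb_simps hi_simps)
    show ?thesis using e n 3 unfolding r by (simp add: rsf_simps cn_simp dg_def algebra_simps)
  next
    case 4
    have r: "ra n i = i - 1" "rb n i = i - 2" "hi n i = n" using 4 n by (simp_all add: ra_simps rb_simps hi_simps)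
    have k: "0 < i - 1" "i - 1 < n" "0 < i - 2" "i - 2 < n" using 4 by auto
    show ?thesis using e n 4 unfolding r using k by (simp add: rsf_def cn_simp dg_def algebra_simps)
  next
    case 5
    have r: "ra n i = n + 1" "rb n i = n" "hi n i = 2 * n" using 5 n by (simp_all add: ra_simps rb_simps hi_simps)
    show ?thesis using e n 5 unfolding r by (simp add: rsf_simps cn_simp dg_def algebra_simps)
  next
    case 6
    have r: "ra n i = i" "rb n i = i - 1" "hi n i = 2 * n" using 6 n by (simp_all add: ra_simps rb_simps hi_simps)
    have k: "i \<noteq> 0" "\<not> i < n" "i \<noteq> n" "i - 1 \<noteq> 0" "\<not> i - 1 < n" "i - 1 \<noteq> n" using 6 by auto
    show ?thesis using e n 6 i unfolding r using k by (simp add: rsf_def cn_simp dg_def algebra_simps)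
  qed
qed

lemma Tm_carrier: "Tm n p \<in> carrier_mat (2*n) (2*n)"
  unfolding Tm_def by (intro mult_carrier_mat) (auto simp: Qm_def Pim_def Pm_def)

lemma charpoly_Qp: assumes n: "n \<ge> 2"
  shows "char_poly (Qp n p) = (\<Prod>i\<leftarrow>[0..<2*n]. [:- dg n p i, 1:])"
proof -
  have P: "Pm n \<in> carrier_mat (2*n) (2*n)" and Pi: "Pim n \<in> carrier_mat (2*n) (2*n)"
    and Q: "Qm n p \<in> carrier_mat (2*n) (2*n)" by (auto simp: Pm_def Pim_def Qm_def)
  have PiP: "Pim n * Pm n = 1\<^sub>m (2*n)" by (rule PimPm[OF n])
  have PPi: "Pm n * Pim n = 1\<^sub>m (2*n)" by (rule mat_mult_left_right_inverse[OF Pi P PiP])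
  have "Pm n * Tm n p * Pim n = (Pm n * Pim n) * Qm n p * (Pm n * Pim n)"
    unfolding Tm_def using P Pi Q by (simp add: assoc_mult_mat[of _ "2*n" "2*n" _ "2*n" _ "2*n"])
  also have "\<dots> = Qm n p" using Q unfolding PPi by simp
  finally have eq: "Qm n p = Pm n * Tm n p * Pim n" by simp
  have "similar_mat (Qm n p) (Tm n p)"
    unfolding similar_mat_def similar_mat_wit_def Let_def
    apply (rule exI[of _ "Pm n"], rule exI[of _ "Pim n"])
    using P Pi Q Tm_carrier[of n p] PiP PPi eq by (simp add: Qm_def)
  then have "char_poly (Qp n p) = char_poly (Tm n p)"
    using char_poly_similar Qp_mat[of n p] n unfolding Qm_def by auto
  also have "\<dots> = (\<Prod>a\<leftarrow>diag_mat (Tm n p). [:- a, 1:])"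
    by (rule char_poly_upper_triangular[OF Tm_carrier])
      (use Tm_ut[OF n, of _ _ p] Tm_carrier[of n p] in \<open>auto simp: upper_triangular_def\<close>)
  also have "diag_mat (Tm n p) = map (dg n p) [0..<2*n]"
    using Tm_carrier[of n p] Tm_diag[OF n] by (auto simp: diag_mat_def)
  finally show ?thesis by (simp add: comp_def)
qed


lemma order_prod_lin: "order x (\<Prod>y\<leftarrow>ys. [:- y, 1:]) = count (mset ys) (x::real)"
proof (induction ys)
  case Nil
  then show ?case by simp
next
  case (Cons y ys)
  define P where "P = (\<Prod>y\<leftarrow>ys. [:- y, 1:] :: real poly)"
  have nz0: "\<And>z. z \<in> set (map (\<lambda>y. [:- y, 1:]) ys) \<Longrightarrow> z \<noteq> (0 :: real poly)"
    by auto
  have nz: "P \<noteq> 0"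
    unfolding P_def using nz0 by (metis prod_list_zero_iff)
  have pr: "[:- y, 1:] * P \<noteq> 0"
    by (rule no_zero_divisors) (simp, rule nz)
  have eq: "(\<Prod>y\<leftarrow>y#ys. [:- y, 1:]) = [:- y, 1:] * P"
    unfolding P_def by (simp only: list.map prod_list.Cons)
  have o: "order x ([:- y, 1:] * P) = order x [:- y, 1:] + order x P"
    by (rule order_mult[OF pr])
  moreover have "order x [:- y, 1:] = (if x = y then 1 else 0)"
  proof (cases "x = y")
    case True
    then show ?thesis using order_power_n_n[of y 1] by simp
  next
    case False
    have "poly [:- y, 1:] x \<noteq> 0" using False by simp
    then have "order x [:- y, 1:] = 0" by (rule order_0I)
    then show ?thesis using False by simp
  qed
  ultimately show ?case using Cons.IH unfolding eq P_def by simp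
qed

lemma sorted_prod_unique: assumes "sorted xs" "sorted ys"
  and "(\<Prod>y\<leftarrow>xs. [:- y, 1:]) = (\<Prod>y\<leftarrow>ys. [:- y, 1:] :: real poly)"
  shows "xs = ys"
proof -
  have "mset xs = mset ys"
    by (rule multiset_eqI) (metis assms(3) order_prod_lin)
  then have "sort ys = xs" using assms(1) by (intro properties_for_sort) auto
  moreover have "sort ys = ys" using assms(2) by (rule sorted_sort_id)
  ultimately show ?thesis by simp
qed

lemma map_const: "(\<forall>x\<in>set xs. f x = c) \<Longrightarrow> map f xs = replicate (length xs) c"
  by (induction xs) auto

lemma prod_mset_eq: "mset xs = mset ys \<Longrightarrow> prod_list (map f xs) = prod_list (map (f :: 'a \<Rightarrow> 'b :: comm_monoid_mult) ys)"
proof -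
  assume H: "mset xs = mset ys"
  have "prod_list (map f xs) = prod_mset (mset (map f xs))" by (rule prod_mset_prod_list[symmetric])
  also have "\<dots> = prod_mset (mset (map f ys))" by (simp only: mset_map H)
  also have "\<dots> = prod_list (map f ys)" by (rule prod_mset_prod_list)
  finally show ?thesis .
qed

definition Rl :: "nat \<Rightarrow> real \<Rightarrow> real list" where
  "Rl n p = replicate (n-2) (1 + real n * p) @ replicate (n-2) (real n - 1 + real n * p) @ [real n + real n * p]"
definition xsl :: "nat \<Rightarrow> real \<Rightarrow> real list" where
  "xsl n p = 0 # real n * p # insort (2 * real n * p) (Rl n p)"

lemma map_dg: assumes n: "n \<ge> 2"
  shows "map (dg n p) [0..<2*n] = [0, 2 * real n * p, real n + real n * p] @ replicate (n-2) (1 + real n * p)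
     @ [real n * p] @ replicate (n-2) (real n - 1 + real n * p)"
proof -
  have u1: "[0..<2*n] = [0..<n+2] @ [n+2..<2*n]"
  proof -
    have "2*n = (n+2) + (n-2)" using n by simp
    then show ?thesis by (metis upt_add_eq_append zero_le)
  qed
  have u2: "[0..<n+2] = [0..<n+1] @ [n+1..<n+2]" by simp
  have u3: "[0..<n+1] = [0..<3] @ [3..<n+1]"
  proof -
    have "n+1 = 3 + (n-2)" using n by simp
    then show ?thesis by (metis upt_add_eq_append zero_le)
  qed
  have u: "[0..<2*n] = [0..<3] @ [3..<n+1] @ [n+1..<n+2] @ [n+2..<2*n]"
    unfolding u1 u2 u3 by simp
  have a: "map (dg n p) [3..<n+1] = replicate (n-2) (1 + real n * p)"
    using map_const[of "[3..<n+1]" "dg n p" "1 + real n * p"] n by (auto simp: dg_def)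
  have b: "map (dg n p) [n+2..<2*n] = replicate (n-2) (real n - 1 + real n * p)"
    using map_const[of "[n+2..<2*n]" "dg n p" "real n - 1 + real n * p"] n by (auto simp: dg_def)
  show ?thesis unfolding u map_append a b using n by (simp add: dg_def upt_rec)
qed

lemma eig_Qp: assumes n: "n \<ge> 3" and p: "p > 0"
  shows "eigvals_asc (Qp n p) = xsl n p"
proof -
  have n2: "n \<ge> 2" using n by simp
  have dim: "dim_row (Qp n p) = 2*n" using Qp_mat[of n p] n by simp
  have m: "mset (map (dg n p) [0..<2*n]) = mset (xsl n p)"
    unfolding map_dg[OF n2] xsl_def Rl_def by (simp add: mset_insort)
  have cp: "char_poly (Qp n p) = (\<Prod>x\<leftarrow>xsl n p. [:- x, 1:])"
    unfolding charpoly_Qp[OF n2] using prod_mset_eq[OF m, of "\<lambda>x. [:- x, 1:]"] by (simp add: comp_def)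
  have len: "length (xsl n p) = 2*n" using n by (simp add: xsl_def Rl_def length_insort)
  have np: "real n * p > 0" "p * real n > 0" "p \<ge> 0" using n p by simp_all
  have sR: "sorted (Rl n p)" unfolding Rl_def using n np by (simp add: sorted_append)
  have ge: "\<forall>z\<in>set (Rl n p). real n * p \<le> z" using n np by (auto simp: Rl_def)
  have si: "sorted (insort (2 * real n * p) (Rl n p))" using sR by (simp add: sorted_insort)
  have ge2: "\<forall>z\<in>set (insort (2 * real n * p) (Rl n p)). real n * p \<le> z"
    using ge np by (simp add: set_insort_key)
  have sx: "sorted (xsl n p)" unfolding xsl_def using si ge2 np by auto
  show ?thesis unfolding eigvals_asc_def dim
  proof (rule the_equality)
    show "sorted (xsl n p) \<and> length (xsl n p) = 2 * n \<and> char_poly (Qp n p) = (\<Prod>x\<leftarrow>xsl n p. [:- x, 1:])"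
      by (intro conjI sx len cp)
  next
    fix xs assume H: "sorted xs \<and> length xs = 2 * n \<and> char_poly (Qp n p) = (\<Prod>x\<leftarrow>xs. [:- x, 1:])"
    then have a: "sorted xs" by (rule conjunct1)
    from H have b: "char_poly (Qp n p) = (\<Prod>x\<leftarrow>xs. [:- x, 1:])" by blast
    have "(\<Prod>x\<leftarrow>xs. [:- x, 1:]) = char_poly (Qp n p)" by (rule b[symmetric])
    also have "\<dots> = (\<Prod>x\<leftarrow>xsl n p. [:- x, 1:])" by (rule cp)
    finally show "xs = xsl n p" by (rule sorted_prod_unique[OF a sx])
  qed
qed


theorem mainTheorem7:
  fixes n :: nat
  assumes "n \<ge> 3"
  shows "(\<forall>p::real. p > 0 \<longrightarrow> mu (Qp n p) (2*n - 1) \<noteq> 2 * real n * p)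
       \<and> (\<forall>p::real. p > 0 \<longrightarrow> (mu (Qp n p) (2*n - 2) = 2 * real n * p \<longleftrightarrow> p \<le> 1 / real n))"
proof -
  have dim: "\<And>p. dim_row (Qp n p) = 2*n" using Qp_mat assms by simp
  have R: "\<And>p. Rl n p = (1 + real n * p) # (replicate (n-3) (1 + real n * p) @ replicate (n-2) (real n - 1 + real n * p) @ [real n + real n * p])"
    using assms unfolding Rl_def by (cases "n - 2") auto
  have m1: "mu (Qp n p) (2*n - 1) = real n * p" if "p > 0" for p
    unfolding mu_def dim eig_Qp[OF assms that] using assms by (simp add: xsl_def)
  have m2: "mu (Qp n p) (2*n - 2) = (if 2 * real n * p \<le> 1 + real n * p then 2 * real n * p else 1 + real n * p)" if "p > 0" for p
  proof -
    have "2*n - (2*n-2) = 2" using assms by simp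
    then show ?thesis unfolding mu_def dim eig_Qp[OF assms that] xsl_def R by simp
  qed
  have nz: "real n > 0" using assms by simp
  show ?thesis
  proof (intro conjI allI impI)
    fix p :: real assume p: "p > 0"
    show "mu (Qp n p) (2*n - 1) \<noteq> 2 * real n * p" unfolding m1[OF p] using p nz by simp
  next
    fix p :: real assume p: "p > 0"
    have iff: "p \<le> 1 / real n \<longleftrightarrow> real n * p \<le> 1" using nz by (simp add: field_simps)
    show "mu (Qp n p) (2*n - 2) = 2 * real n * p \<longleftrightarrow> p \<le> 1 / real n"
      unfolding m2[OF p] iff by (auto simp: mult.commute)
  qed
qed

end
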